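(* There exists $N$ such that for every integer $n\ge N$ there is a tree $T$ on $n$ vertices with the following property: for every (deterministic) strategy of the cat in the Cat and Mouse game on $T$, there is a sequence of mouse positions $(m_i)_{i\ge1}$ such that $\mathrm{rad}_T(M_i)>\sqrt{n}/12$ for every $i\ge1$; that is, the mouse avoids being localised up to distance $\sqrt{n}/12$ forever.
   Context: The Cat and Mouse game is played on a simple, undirected, connected graph $G$ with $n$ vertices, in discrete time steps $i=1,2,\dots$. The mouse occupies vertices $m_1,m_2,\dots$, where for $i\ge2$, $m_i$ equals $m_{i-1}$ or is a neighbour of $m_{i-1}$. At time $i$ the cat chooses (tests) an arbitrary vertex $c_i$. For $i\ge2$ the cat is told $b_i=1$ if $d(c_i,m_i)\le d(c_{i-1},m_{i-1})$ and $b_i=0$ otherwise, where $d$ is the graph distance. A strategy of the cat is a triple $(c_1,c_2,f)$ with $c_1,c_2\in V(G)$ and $f:\bigcup_{i\in\mathbb N}\{0,1\}^i\to V(G)$, meaning $c_i=f(b_2,\dots,b_{i-1})$ for $i\ge3$; it is fixed in advance and deterministic, and the mouse knows it (so the mouse's sequence may depend on it). $M_i$ is the set of vertices $v$ for which there exist $\tilde m_1,\dots,\tilde m_i$ with $\tilde m_i=v$, $\tilde m_j$ in the closed neighbourhood of $\tilde m_{j-1}$ for $2\le j\le i$, and for each $2\le j\le i$: $d(c_j,\tilde m_j)\le d(c_{j-1},\tilde m_{j-1})$ iff $b_j=1$. The radius of $W\subseteq V(G)$ is $\mathrm{rad}_G(W)=\min_{v\in V(G)}\max_{w\in W} d(v,w)$.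 *)

theory Defs
  imports Complex_Main
begin

definition simple_graph :: "'a set \<Rightarrow> ('a \<Rightarrow> 'a \<Rightarrow> bool) \<Rightarrow> bool" where
  "simple_graph V E \<longleftrightarrow> finite V \<and> (\<forall>u v. E u v \<longrightarrow> u \<in> V \<and> v \<in> V)
     \<and> (\<forall>u v. E u v \<longrightarrow> E v u) \<and> (\<forall>u. \<not> E u u)"

definition connected_graph :: "'a set \<Rightarrow> ('a \<Rightarrow> 'a \<Rightarrow> bool) \<Rightarrow> bool" where
  "connected_graph V E \<longleftrightarrow> (\<forall>u\<in>V. \<forall>v\<in>V. \<exists>k. (E ^^ k) u v)"

definition has_cycle :: "('a \<Rightarrow> 'a \<Rightarrow> bool) \<Rightarrow> bool" where
  "has_cycle E \<longleftrightarrow> (\<exists>p. length p \<ge> 3 \<and> distinct p \<and>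
      (\<forall>i. Suc i < length p \<longrightarrow> E (p ! i) (p ! Suc i)) \<and> E (last p) (hd p))"

definition is_tree :: "'a set \<Rightarrow> ('a \<Rightarrow> 'a \<Rightarrow> bool) \<Rightarrow> bool" where
  "is_tree V E \<longleftrightarrow> V \<noteq> {} \<and> simple_graph V E \<and> connected_graph V E \<and> \<not> has_cycle E"

definition gdist :: "('a \<Rightarrow> 'a \<Rightarrow> bool) \<Rightarrow> 'a \<Rightarrow> 'a \<Rightarrow> nat" where
  "gdist E u v = (LEAST k. (E ^^ k) u v)"

definition grad :: "'a set \<Rightarrow> ('a \<Rightarrow> 'a \<Rightarrow> bool) \<Rightarrow> 'a set \<Rightarrow> nat" where
  "grad V E W = Min ((\<lambda>v. Max ((\<lambda>w. gdist E v w) ` W)) ` V)"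

text \<open>Cat strategy (c1, c2, f). Position of the cat at time i, given the answer history
  h = [b_2, ..., b_{i-1}].\<close>
definition cat_at :: "'a \<Rightarrow> 'a \<Rightarrow> (bool list \<Rightarrow> 'a) \<Rightarrow> nat \<Rightarrow> bool list \<Rightarrow> 'a" where
  "cat_at c1 c2 f i h = (if i \<le> 1 then c1 else if i = 2 then c2 else f h)"

text \<open>Answer history up to time k: hist k = [b_2, ..., b_k] (times are 1-based).\<close>
fun hist :: "('a \<Rightarrow> 'a \<Rightarrow> bool) \<Rightarrow> 'a \<Rightarrow> 'a \<Rightarrow> (bool list \<Rightarrow> 'a) \<Rightarrow> (nat \<Rightarrow> 'a) \<Rightarrow> nat \<Rightarrow> bool list" where
  "hist E c1 c2 f m 0 = []"
| "hist E c1 c2 f m (Suc 0) = []"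
| "hist E c1 c2 f m (Suc (Suc k)) =
     hist E c1 c2 f m (Suc k) @
       [gdist E (cat_at c1 c2 f (Suc (Suc k)) (hist E c1 c2 f m (Suc k))) (m (Suc (Suc k)))
        \<le> gdist E (cat_at c1 c2 f (Suc k) (hist E c1 c2 f m k)) (m (Suc k))]"

definition catpos :: "('a \<Rightarrow> 'a \<Rightarrow> bool) \<Rightarrow> 'a \<Rightarrow> 'a \<Rightarrow> (bool list \<Rightarrow> 'a) \<Rightarrow> (nat \<Rightarrow> 'a) \<Rightarrow> nat \<Rightarrow> 'a" where
  "catpos E c1 c2 f m i = cat_at c1 c2 f i (hist E c1 c2 f m (i - 1))"

definition answer :: "('a \<Rightarrow> 'a \<Rightarrow> bool) \<Rightarrow> 'a \<Rightarrow> 'a \<Rightarrow> (bool list \<Rightarrow> 'a) \<Rightarrow> (nat \<Rightarrow> 'a) \<Rightarrow> nat \<Rightarrow> bool" where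
  "answer E c1 c2 f m i \<longleftrightarrow>
     gdist E (catpos E c1 c2 f m i) (m i) \<le> gdist E (catpos E c1 c2 f m (i - 1)) (m (i - 1))"

definition mouse_seq :: "'a set \<Rightarrow> ('a \<Rightarrow> 'a \<Rightarrow> bool) \<Rightarrow> (nat \<Rightarrow> 'a) \<Rightarrow> bool" where
  "mouse_seq V E m \<longleftrightarrow> (\<forall>i\<ge>1. m i \<in> V) \<and>
     (\<forall>i\<ge>2. m i = m (i - 1) \<or> E (m (i - 1)) (m i))"

text \<open>M_i: vertices consistent with the answers b_2..b_i, given the cat's tests c_1..c_i.\<close>
definition Mset :: "'a set \<Rightarrow> ('a \<Rightarrow> 'a \<Rightarrow> bool) \<Rightarrow> 'a \<Rightarrow> 'a \<Rightarrow> (bool list \<Rightarrow> 'a) \<Rightarrow> (nat \<Rightarrow> 'a) \<Rightarrow> nat \<Rightarrow> 'a set" where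
  "Mset V E c1 c2 f m i = {v. \<exists>m'. m' i = v \<and> (\<forall>j\<in>{1..i}. m' j \<in> V) \<and>
     (\<forall>j\<in>{2..i}. (m' j = m' (j - 1) \<or> E (m' (j - 1)) (m' j)) \<and>
        ((gdist E (catpos E c1 c2 f m j) (m' j) \<le> gdist E (catpos E c1 c2 f m (j - 1)) (m' (j - 1)))
          \<longleftrightarrow> answer E c1 c2 f m j))}"

end

theory Submission
  imports Defs
begin

definition par :: "nat \<Rightarrow> nat \<Rightarrow> nat" where "par k v = (if v \<le> k then 0 else v - k)"
definition sE :: "nat \<Rightarrow> nat \<Rightarrow> nat \<Rightarrow> nat \<Rightarrow> bool" where
  "sE n k u v \<longleftrightarrow> u < n \<and> v < n \<and> ((v \<noteq> 0 \<and> u = par k v) \<or> (u \<noteq> 0 \<and> v = par k u))"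
definition dep :: "nat \<Rightarrow> nat \<Rightarrow> nat" where "dep k v = (v + k - 1) div k"
definition lg :: "nat \<Rightarrow> nat \<Rightarrow> nat" where "lg k v = (v - 1) mod k"
definition pos :: "nat \<Rightarrow> nat \<Rightarrow> nat \<Rightarrow> nat" where "pos k l t = (if t = 0 then 0 else (t-1)*k + l + 1)"
definition dd :: "nat \<Rightarrow> nat \<Rightarrow> nat \<Rightarrow> nat" where
  "dd k u v = (if u \<noteq> 0 \<and> v \<noteq> 0 \<and> lg k u = lg k v
     then (if dep k u \<ge> dep k v then dep k u - dep k v else dep k v - dep k u) else dep k u + dep k v)"

locale spider = fixes n k :: nat assumes kpos: "k \<ge> 1"
begin

abbreviation "E \<equiv> sE n k"

lemma dep0[simp]: "dep k 0 = 0" using kpos by (simp add: dep_def)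

lemma dep_nz: "v \<noteq> 0 \<Longrightarrow> dep k v = (v - 1) div k + 1"
  using kpos unfolding dep_def
  by (metis Nat.add_diff_assoc2 add.commute add_diff_cancel_right' div_add_self1 le_add1 less_one
      linorder_not_le not_one_le_zero plus_1_eq_Suc)

lemma dep_pos[simp]: "l < k \<Longrightarrow> dep k (pos k l t) = t"
  by (cases "t = 0") (auto simp: pos_def dep_nz)

lemma lg_pos[simp]: "l < k \<Longrightarrow> t \<noteq> 0 \<Longrightarrow> lg k (pos k l t) = l"
  by (auto simp: pos_def lg_def)

lemma pos_nz[simp]: "t \<noteq> 0 \<Longrightarrow> pos k l t \<noteq> 0" by (simp add: pos_def)
lemma pos_0[simp]: "pos k l 0 = 0" by (simp add: pos_def)

lemma lg_lt: "lg k v < k" using kpos by (simp add: lg_def)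

lemma repr: "v \<noteq> 0 \<Longrightarrow> pos k (lg k v) (dep k v) = v"
  by (simp add: pos_def dep_nz lg_def)

lemma dep_nz_pos: "v \<noteq> 0 \<Longrightarrow> dep k v \<noteq> 0" by (simp add: dep_nz)

lemma par_lt: "v \<noteq> 0 \<Longrightarrow> par k v < v" using kpos by (auto simp: par_def)

lemma dep_par: "v \<noteq> 0 \<Longrightarrow> dep k (par k v) = dep k v - 1"
proof -
  assume v: "v \<noteq> 0"
  show ?thesis
  proof (cases "v \<le> k")
    case True then show ?thesis using v by (simp add: par_def dep_nz)
  next
    case False
    then obtain w where w: "v = w + k + 1" by (metis add.commute le_add1 less_imp_Suc_add not_le plus_1_eq_Suc add.assoc)
    have "dep k (par k v) = w div k + 1" using w kpos by (simp add: par_def dep_nz)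
    moreover have "dep k v = (w + k) div k + 1" using w by (simp add: dep_nz)
    moreover have "(w + k) div k = w div k + 1" using kpos by simp
    ultimately show ?thesis by simp
  qed
qed

lemma lg_par: "par k v \<noteq> 0 \<Longrightarrow> lg k (par k v) = lg k v"
proof -
  assume p: "par k v \<noteq> 0"
  then have F: "\<not> v \<le> k" by (auto simp: par_def)
  then obtain w where w: "v = w + k + 1" by (metis add.commute le_add1 less_imp_Suc_add not_le plus_1_eq_Suc add.assoc)
  show ?thesis using w kpos by (simp add: par_def lg_def)
qed

lemma E_sym: "E u v \<Longrightarrow> E v u" by (auto simp: sE_def)

lemma E_lt: "E u v \<Longrightarrow> u < v \<Longrightarrow> u = par k v"
  using par_lt by (auto simp: sE_def) (meson less_asym)

lemma dd_sym: "dd k u v = dd k v u" by (auto simp: dd_def)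

lemma dd_refl[simp]: "dd k u u = 0" by (simp add: dd_def)

lemma dd_par: "v \<noteq> 0 \<Longrightarrow> dd k u v \<le> dd k u (par k v) + 1 \<and> dd k u (par k v) \<le> dd k u v + 1"
proof -
  assume v: "v \<noteq> 0"
  have d: "dep k (par k v) = dep k v - 1" by (rule dep_par[OF v])
  have dv: "dep k v \<noteq> 0" using dep_nz_pos[OF v] .
  show ?thesis
  proof (cases "par k v = 0")
    case True
    then have "dep k v = 1" using d dv by simp
    then show ?thesis using True v by (auto simp: dd_def)
  next
    case False
    then have "lg k (par k v) = lg k v" by (rule lg_par)
    then show ?thesis using False v d dv by (auto simp: dd_def)
  qed
qed

lemma dd_step: "E w v \<Longrightarrow> dd k u v \<le> dd k u w + 1"
  using dd_par by (auto simp: sE_def)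

lemma walk_lower: "(E ^^ j) u v \<Longrightarrow> dd k u v \<le> j"
proof (induction j arbitrary: v)
  case 0 then show ?case by auto
next
  case (Suc j)
  from Suc.prems obtain w where "(E ^^ j) u w" "E w v" by (rule relpowp_Suc_E)
  have "dd k u w \<le> j" using Suc.IH[OF \<open>(E ^^ j) u w\<close>] .
  moreover have "dd k u v \<le> dd k u w + 1" using dd_step[OF \<open>E w v\<close>] .
  ultimately show ?case by simp
qed

lemma walk_sym: "(E ^^ j) u v \<Longrightarrow> (E ^^ j) v u"
proof (induction j arbitrary: v)
  case 0 then show ?case by auto
next
  case (Suc j)
  from Suc.prems obtain w where "(E ^^ j) u w" "E w v" by (rule relpowp_Suc_E)
  have "(E ^^ j) w u" using Suc.IH[OF \<open>(E ^^ j) u w\<close>] .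
  then show ?case using relpowp_Suc_I2[of E v w j u] E_sym[OF \<open>E w v\<close>] by blast
qed

lemma E_par: "v < n \<Longrightarrow> v \<noteq> 0 \<Longrightarrow> E (par k v) v"
proof -
  assume a: "v < n" "v \<noteq> 0"
  have "par k v < n" using par_lt[OF a(2)] a(1) by linarith
  then show ?thesis unfolding sE_def using a by blast
qed

lemma walk_center: "v < n \<Longrightarrow> (E ^^ dep k v) 0 v"
proof (induction v rule: less_induct)
  case (less v)
  show ?case
  proof (cases "v = 0")
    case True then show ?thesis by simp
  next
    case False
    have "(E ^^ dep k (par k v)) 0 (par k v)" using less par_lt[OF False] by auto
    then have "(E ^^ Suc (dep k (par k v))) 0 v" using E_par[OF less.prems False] by (rule relpowp_Suc_I)
    then show ?thesis using dep_par[OF False] dep_nz_pos[OF False] by simp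
  qed
qed

lemma walk_leg: "dep k v - dep k u = d \<Longrightarrow> v < n \<Longrightarrow> u \<noteq> 0 \<Longrightarrow> v \<noteq> 0 \<Longrightarrow> lg k u = lg k v \<Longrightarrow> dep k u \<le> dep k v
   \<Longrightarrow> (E ^^ d) u v"
proof (induction d arbitrary: v)
  case 0
  have "dep k u = dep k v" using 0(1) 0(6) by linarith
  then have "u = v" using repr[OF 0(3)] repr[OF 0(4)] 0(5) by metis
  then show ?case by simp
next
  case (Suc x)
  note v0 = Suc.prems(4)
  have pv: "par k v \<noteq> 0"
  proof
    assume "par k v = 0"
    then have "dep k (par k v) = 0" by simp
    then have "dep k v = 1" using dep_par[OF v0] dep_nz_pos[OF v0] by linarith
    then show False using Suc.prems(1) dep_nz_pos[OF Suc.prems(3)] by linarith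
  qed
  have dp: "dep k (par k v) = dep k v - 1" using dep_par[OF v0] .
  have h: "(E ^^ x) u (par k v)"
  proof (rule Suc.IH)
    show "dep k (par k v) - dep k u = x" using dp Suc.prems(1) by linarith
    show "par k v < n" using par_lt[OF v0] Suc.prems(2) by linarith
    show "u \<noteq> 0" by fact
    show "par k v \<noteq> 0" by fact
    show "lg k u = lg k (par k v)" using lg_par[OF pv] Suc.prems(5) by simp
    show "dep k u \<le> dep k (par k v)" using dp Suc.prems(1) by linarith
  qed
  show ?case using relpowp_Suc_I[OF h E_par[OF Suc.prems(2) v0]] .
qed

lemma walk_upper: "u < n \<Longrightarrow> v < n \<Longrightarrow> (E ^^ dd k u v) u v"
proof -
  assume u: "u < n" and v: "v < n"
  show ?thesis
  proof (cases "u \<noteq> 0 \<and> v \<noteq> 0 \<and> lg k u = lg k v")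
    case T1: True
    show ?thesis
    proof (cases "dep k u \<le> dep k v")
      case True
      have "(E ^^ (dep k v - dep k u)) u v" using walk_leg[OF refl v] T1 True by blast
      moreover have "dd k u v = dep k v - dep k u" using T1 True by (auto simp: dd_def)
      ultimately show ?thesis by simp
    next
      case False
      then have "(E ^^ (dep k u - dep k v)) v u" using walk_leg[OF refl u] T1 by auto
      moreover have "dd k u v = dep k u - dep k v" using T1 False by (auto simp: dd_def)
      ultimately show ?thesis using walk_sym by simp
    qed
  next
    case False
    have "(E ^^ (dep k u + dep k v)) u v"
      using relpowp_trans[OF walk_sym[OF walk_center[OF u]] walk_center[OF v]] .
    then show ?thesis using False by (auto simp: dd_def)
  qed
qed

lemma gdist_eq: "u < n \<Longrightarrow> v < n \<Longrightarrow> gdist E u v = dd k u v"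
  unfolding gdist_def
  by (rule Least_equality) (auto intro: walk_upper dest: walk_lower)

lemma dd_tri: "dd k u v \<le> dd k u w + dd k w v"
  by (auto simp: dd_def)

end

context spider begin

lemma no_cycle: "\<not> has_cycle E"
proof
  assume "has_cycle E"
  then obtain p where len: "length p \<ge> 3" and dist: "distinct p"
    and cons: "\<And>i. Suc i < length p \<Longrightarrow> E (p ! i) (p ! Suc i)" and cl: "E (last p) (hd p)"
    unfolding has_cycle_def by blast
  define L where "L = length p"
  have ne: "p \<noteq> []" using len by auto
  define w where "w = Max (set p)"
  have "w \<in> set p" using ne unfolding w_def by simp
  then obtain i where i: "i < L" "p ! i = w" unfolding L_def by (metis in_set_conv_nth)
  have wmax: "\<And>j. j < L \<Longrightarrow> p ! j \<le> w" unfolding w_def L_def by simp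
  have adj: "\<And>j j'. j < L \<Longrightarrow> j' < L \<Longrightarrow> (j' = Suc j \<or> (j = L - 1 \<and> j' = 0)) \<Longrightarrow> E (p ! j) (p ! j')"
  proof -
    fix j j' assume a: "j < L" "j' < L" "j' = Suc j \<or> (j = L - 1 \<and> j' = 0)"
    show "E (p ! j) (p ! j')"
    proof (cases "j' = Suc j")
      case True then show ?thesis using cons a unfolding L_def by simp
    next
      case False
      then have "j = L - 1" "j' = 0" using a by auto
      then show ?thesis using cl ne unfolding L_def by (simp add: hd_conv_nth last_conv_nth)
    qed
  qed
  define a where "a = (if i = 0 then L - 1 else i - 1)"
  define b where "b = (if i = L - 1 then 0 else i + 1)"
  have aL: "a < L" and bL: "b < L" using i len unfolding a_def b_def L_def by auto
  have ai: "a \<noteq> i" and bi: "b \<noteq> i" and ab: "a \<noteq> b" using i len unfolding a_def b_def L_def by auto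
  have Ea: "E (p ! a) w"
    using adj[OF aL i(1)] i len unfolding a_def L_def by (cases "i = 0") auto
  have Eb: "E w (p ! b)"
    using adj[OF i(1) bL] i len unfolding b_def L_def by (cases "i = L - 1") auto
  have na: "p ! a \<noteq> w" using ai dist aL i unfolding L_def by (metis nth_eq_iff_index_eq)
  have nb: "p ! b \<noteq> w" using bi dist bL i unfolding L_def by (metis nth_eq_iff_index_eq)
  have nab: "p ! a \<noteq> p ! b" using ab dist aL bL unfolding L_def by (metis nth_eq_iff_index_eq)
  have "p ! a < w" using wmax[OF aL] na by simp
  then have pa: "p ! a = par k w" using E_lt[OF Ea] by simp
  have "p ! b < w" using wmax[OF bL] nb by simp
  then have pb: "p ! b = par k w" using E_lt[OF E_sym[OF Eb]] by simp
  show False using pa pb nab by simp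
qed

lemma tree: "n \<ge> 1 \<Longrightarrow> is_tree {..<n} E"
  unfolding is_tree_def simple_graph_def connected_graph_def
proof (intro conjI)
  assume "n \<ge> 1" then show "{..<n} \<noteq> {}" by (simp add: lessThan_empty_iff)
  show "finite {..<n}" by simp
  show "\<forall>u v. E u v \<longrightarrow> u \<in> {..<n} \<and> v \<in> {..<n}" by (simp add: sE_def)
  show "\<forall>u v. E u v \<longrightarrow> E v u" using E_sym by blast
  show "\<forall>u. \<not> E u u" using par_lt by (metis less_irrefl sE_def)
  show "\<forall>u\<in>{..<n}. \<forall>v\<in>{..<n}. \<exists>j. (E ^^ j) u v" using walk_upper by blast
  show "\<not> has_cycle E" by (rule no_cycle)
qed

end

definition downst :: "nat \<Rightarrow> int \<Rightarrow> nat \<Rightarrow> nat \<Rightarrow> nat \<times> nat" where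
  "downst T e x y = (if x = 0 then (x, y) else if e = -1 then (if y = T then (x - 1, y - 1) else (x, y + 1)) else (x - 1, y))"
definition upst :: "nat \<Rightarrow> int \<Rightarrow> nat \<Rightarrow> nat \<Rightarrow> nat \<times> nat" where
  "upst T e x y = (if x = T then (x, y) else if e = 0 then (if y = T then (x, y - 1) else (x + 1, y + 1)) else (x + 1, y))"
definition mv :: "nat \<Rightarrow> nat \<Rightarrow> int \<Rightarrow> nat \<Rightarrow> nat \<Rightarrow> nat \<times> nat" where
  "mv T ph e a b = (if ph = 0 then downst T e a b else if ph = 1 then upst T e a b
     else if ph = 2 then prod.swap (downst T e b a) else prod.swap (upst T e b a))"

lemma downst_bit: "T \<ge> 1 \<Longrightarrow> downst T e x y = (x', y') \<Longrightarrow> e = int s - int s' \<Longrightarrow>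
   (s' + x' \<le> s + x) = (s' + y' \<le> s + y)"
  by (auto simp: downst_def split: if_splits)

lemma upst_bit: "T \<ge> 1 \<Longrightarrow> upst T e x y = (x', y') \<Longrightarrow> e = int s - int s' \<Longrightarrow>
   (s' + x' \<le> s + x) = (s' + y' \<le> s + y)"
  by (auto simp: upst_def split: if_splits)

lemma mv_bit: "T \<ge> 1 \<Longrightarrow> mv T ph e a b = (a', b') \<Longrightarrow> e = int s - int s' \<Longrightarrow>
   (s' + a' \<le> s + a) = (s' + b' \<le> s + b)"
proof -
  assume T: "T \<ge> 1" and m: "mv T ph e a b = (a', b')" and e: "e = int s - int s'"
  consider "ph = 0" "downst T e a b = (a', b')" | "ph = 1" "upst T e a b = (a', b')"
    | "ph \<noteq> 0" "ph \<noteq> 1" "ph = 2" "downst T e b a = (b', a')" | "ph \<noteq> 0" "ph \<noteq> 1" "ph \<noteq> 2" "upst T e b a = (b', a')"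
    using m unfolding mv_def by (auto split: if_splits simp: prod.swap_def prod_eq_iff)
  then show ?thesis
  proof cases
    case 1 then show ?thesis using downst_bit[OF T _ e] by blast
  next
    case 2 then show ?thesis using upst_bit[OF T _ e] by blast
  next
    case 3 then show ?thesis using downst_bit[OF T _ e] by metis
  next
    case 4 then show ?thesis using upst_bit[OF T _ e] by metis
  qed
qed

lemma downst_lip: "downst T e x y = (x', y') \<Longrightarrow> x' \<le> x + 1 \<and> x \<le> x' + 1 \<and> y' \<le> y + 1 \<and> y \<le> y' + 1"
  by (auto simp: downst_def split: if_splits)
lemma upst_lip: "upst T e x y = (x', y') \<Longrightarrow> x' \<le> x + 1 \<and> x \<le> x' + 1 \<and> y' \<le> y + 1 \<and> y \<le> y' + 1"
  by (auto simp: upst_def split: if_splits)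

lemma mv_lip: "mv T ph e a b = (a', b') \<Longrightarrow> a' \<le> a + 1 \<and> a \<le> a' + 1 \<and> b' \<le> b + 1 \<and> b \<le> b' + 1"
proof -
  assume m: "mv T ph e a b = (a', b')"
  consider "downst T e a b = (a', b')" | "upst T e a b = (a', b')"
    | "downst T e b a = (b', a')" | "upst T e b a = (b', a')"
    using m unfolding mv_def by (auto split: if_splits simp: prod.swap_def prod_eq_iff)
  then show ?thesis
  proof cases
    case 1 then show ?thesis using downst_lip by blast
  next
    case 2 then show ?thesis using upst_lip by blast
  next
    case 3 then show ?thesis using downst_lip by blast
  next
    case 4 then show ?thesis using upst_lip by blast
  qed
qed

definition okp :: "nat \<Rightarrow> nat \<Rightarrow> nat \<Rightarrow> bool" where "okp T x y \<longleftrightarrow> x \<le> T \<and> T - 1 \<le> y \<and> y \<le> T"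
definition Phi :: "nat \<Rightarrow> nat \<Rightarrow> nat \<Rightarrow> nat" where "Phi T x y = 2 * x + (if y = T then 0 else 1)"
definition Psi :: "nat \<Rightarrow> nat \<Rightarrow> nat \<Rightarrow> nat" where "Psi T x y = 2 * (T - x) + (if y = T then 1 else 0)"

lemma downst_step: "T \<ge> 1 \<Longrightarrow> okp T x y \<Longrightarrow> downst T e x y = (x', y') \<Longrightarrow>
   okp T x' y' \<and> (x = 0 \<longrightarrow> x' = 0) \<and> (x \<noteq> 0 \<longrightarrow> Phi T x' y' < Phi T x y)"
  by (auto simp: downst_def okp_def Phi_def split: if_splits)

lemma upst_step: "T \<ge> 1 \<Longrightarrow> okp T x y \<Longrightarrow> upst T e x y = (x', y') \<Longrightarrow>
   okp T x' y' \<and> (x = T \<longrightarrow> x' = T) \<and> (x \<noteq> T \<longrightarrow> Psi T x' y' < Psi T x y)"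
  by (auto simp: upst_def okp_def Psi_def split: if_splits)

lemma down_iter:
  assumes T: "T \<ge> 1" and st: "\<And>j. j < N \<Longrightarrow> downst T (e j) (x j) (y j) = (x (Suc j), y (Suc j))"
    and ok0: "okp T (x 0) (y 0)"
  shows "j \<le> N \<Longrightarrow> okp T (x j) (y j) \<and> (x j = 0 \<or> Phi T (x j) (y j) + j \<le> Phi T (x 0) (y 0))"
proof (induction j)
  case 0 then show ?case using ok0 by simp
next
  case (Suc j)
  then have IH: "okp T (x j) (y j) \<and> (x j = 0 \<or> Phi T (x j) (y j) + j \<le> Phi T (x 0) (y 0))" by simp
  have s: "okp T (x (Suc j)) (y (Suc j)) \<and> (x j = 0 \<longrightarrow> x (Suc j) = 0) \<and> (x j \<noteq> 0 \<longrightarrow> Phi T (x (Suc j)) (y (Suc j)) < Phi T (x j) (y j))"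
  proof -
    have "j < N" using Suc.prems by simp
    then show ?thesis using downst_step[OF T conjunct1[OF IH] st] by blast
  qed
  then show ?case using IH by auto
qed

lemma up_iter:
  assumes T: "T \<ge> 1" and st: "\<And>j. j < N \<Longrightarrow> upst T (e j) (x j) (y j) = (x (Suc j), y (Suc j))"
    and ok0: "okp T (x 0) (y 0)"
  shows "j \<le> N \<Longrightarrow> okp T (x j) (y j) \<and> (x j = T \<or> Psi T (x j) (y j) + j \<le> Psi T (x 0) (y 0))"
proof (induction j)
  case 0 then show ?case using ok0 by simp
next
  case (Suc j)
  then have IH: "okp T (x j) (y j) \<and> (x j = T \<or> Psi T (x j) (y j) + j \<le> Psi T (x 0) (y 0))" by simp
  have s: "okp T (x (Suc j)) (y (Suc j)) \<and> (x j = T \<longrightarrow> x (Suc j) = T) \<and> (x j \<noteq> T \<longrightarrow> Psi T (x (Suc j)) (y (Suc j)) < Psi T (x j) (y j))"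
  proof -
    have "j < N" using Suc.prems by simp
    then show ?thesis using upst_step[OF T conjunct1[OF IH] st] by blast
  qed
  then show ?case using IH by auto
qed

lemma down_final:
  assumes T: "T \<ge> 1" and st: "\<And>j. j < 2*T+1 \<Longrightarrow> downst T (e j) (x j) (y j) = (x (Suc j), y (Suc j))"
    and ok0: "okp T (x 0) (y 0)"
  shows "\<forall>j \<le> 2*T+1. okp T (x j) (y j)" "x (2*T+1) = 0"
proof -
  show "\<forall>j \<le> 2*T+1. okp T (x j) (y j)" using down_iter[OF T st ok0] by blast
  have h: "x (2*T+1) = 0 \<or> Phi T (x (2*T+1)) (y (2*T+1)) + (2*T+1) \<le> Phi T (x 0) (y 0)"
    using down_iter[OF T st ok0, of "2*T+1"] by blast
  have "Phi T (x 0) (y 0) \<le> 2*T+1" using ok0 by (auto simp: Phi_def okp_def)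
  then show "x (2*T+1) = 0" using h by (auto simp: Phi_def)
qed

lemma up_final:
  assumes T: "T \<ge> 1" and st: "\<And>j. j < 2*T+1 \<Longrightarrow> upst T (e j) (x j) (y j) = (x (Suc j), y (Suc j))"
    and ok0: "okp T (x 0) (y 0)"
  shows "\<forall>j \<le> 2*T+1. okp T (x j) (y j)" "x (2*T+1) = T"
proof -
  show "\<forall>j \<le> 2*T+1. okp T (x j) (y j)" using up_iter[OF T st ok0] by blast
  have h: "x (2*T+1) = T \<or> Psi T (x (2*T+1)) (y (2*T+1)) + (2*T+1) \<le> Psi T (x 0) (y 0)"
    using up_iter[OF T st ok0, of "2*T+1"] by blast
  have "Psi T (x 0) (y 0) \<le> 2*T+1" using ok0 by (auto simp: Psi_def okp_def)
  moreover have "x (2*T+1) \<le> T" using up_iter[OF T st ok0, of "2*T+1"] by (simp add: okp_def)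
  ultimately show "x (2*T+1) = T" using h by (auto simp: Psi_def)
qed

locale game = spider n k for n k +
  fixes T K c1 c2 :: nat and f :: "bool list \<Rightarrow> nat"
  assumes T1: "T \<ge> 1" and kK: "k = 2 * K" and KP: "K > 4 * (2 * T + 1)" and Tn: "T * k < n"
    and c1n: "c1 < n" and c2n: "c2 < n" and fn: "\<forall>h. f h < n"
begin

abbreviation "P \<equiv> 2 * T + 1"

primrec g :: "nat \<Rightarrow> nat \<times> nat \<times> bool list \<times> nat" where
  "g 0 = (T, T, [], c1)"
| "g (Suc i) = (case g i of (a, b, H, c) \<Rightarrow>
     (let c' = cat_at c1 c2 f (i + 2) H;
          ab = mv T ((i div P) mod 4) (int (dep k c) - int (dep k c')) a b
      in (fst ab, snd ab, H @ [dep k c' + fst ab \<le> dep k c + a], c')))"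

definition "A i = fst (g i)"
definition "B i = fst (snd (g i))"
definition "H i = fst (snd (snd (g i)))"
definition "C i = snd (snd (snd (g i)))"

lemma g_eq: "g i = (A i, B i, H i, C i)" by (simp add: A_def B_def H_def C_def)

lemma g0: "A 0 = T" "B 0 = T" "H 0 = []" "C 0 = c1" by (simp_all add: A_def B_def H_def C_def)

lemma g_Suc: "g (Suc i) = (let c' = cat_at c1 c2 f (i + 2) (H i);
     ab = mv T ((i div P) mod 4) (int (dep k (C i)) - int (dep k c')) (A i) (B i)
   in (fst ab, snd ab, H i @ [dep k c' + fst ab \<le> dep k (C i) + A i], c'))"
proof -
  obtain a b h c where gi: "g i = (a, b, h, c)" by (cases "g i") auto
  have "A i = a" "B i = b" "H i = h" "C i = c" using gi by (simp_all add: A_def B_def H_def C_def)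
  then show ?thesis using gi by simp
qed

lemma CS: "C (Suc i) = cat_at c1 c2 f (i + 2) (H i)"
  unfolding C_def[of "Suc i"] g_Suc by (simp add: Let_def)

lemma step_eq: "mv T ((i div P) mod 4) (int (dep k (C i)) - int (dep k (C (Suc i)))) (A i) (B i) = (A (Suc i), B (Suc i))"
  unfolding A_def[of "Suc i"] B_def[of "Suc i"] g_Suc CS by (simp add: Let_def)

lemma HS: "H (Suc i) = H i @ [dep k (C (Suc i)) + A (Suc i) \<le> dep k (C i) + A i]"
  unfolding H_def[of "Suc i"] A_def[of "Suc i"] g_Suc CS by (simp add: Let_def)

lemma bitB: "(dep k (C (Suc i)) + A (Suc i) \<le> dep k (C i) + A i) = (dep k (C (Suc i)) + B (Suc i) \<le> dep k (C i) + B i)"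
  by (rule mv_bit[OF T1 step_eq refl])

lemma lipA: "A (Suc i) \<le> A i + 1 \<and> A i \<le> A (Suc i) + 1 \<and> B (Suc i) \<le> B i + 1 \<and> B i \<le> B (Suc i) + 1"
  by (rule mv_lip[OF step_eq])

lemma C_lt: "C i < n"
proof (cases i)
  case 0 then show ?thesis using c1n g0 by simp
next
  case (Suc j) then show ?thesis using c2n fn by (simp add: CS cat_at_def)
qed

lemma phase_div: "j < P \<Longrightarrow> ((P * q + j) div P) mod 4 = q mod 4"
proof -
  assume j: "j < P"
  have "(j + q * P) div P = q + j div P" by (rule div_mult_self1) simp
  then have "(P * q + j) div P = q" using j by (simp add: add.commute mult.commute)
  then show ?thesis by simp
qed

definition "ee i = int (dep k (C i)) - int (dep k (C (Suc i)))"

lemma ph_down0: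
  assumes q: "q mod 4 = 0" and ok: "okp T (A (P*q)) (B (P*q))"
  shows "(\<forall>j\<le>P. okp T (A (P*q+j)) (B (P*q+j))) \<and> A (P*q+P) = 0"
proof -
  have st: "\<And>j. j < P \<Longrightarrow> downst T (ee (P*q+j)) (A (P*q+j)) (B (P*q+j)) = (A (P*q+Suc j), B (P*q+Suc j))"
  proof -
    fix j assume "j < P"
    then show "downst T (ee (P*q+j)) (A (P*q+j)) (B (P*q+j)) = (A (P*q+Suc j), B (P*q+Suc j))"
      using step_eq[of "P*q+j"] phase_div[of j q] q unfolding ee_def mv_def by simp
  qed
  show ?thesis using down_final[OF T1, of "\<lambda>j. ee (P*q+j)" "\<lambda>j. A (P*q+j)" "\<lambda>j. B (P*q+j)"] st ok by simp
qed

lemma ph_up1: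
  assumes q: "q mod 4 = 1" and ok: "okp T (A (P*q)) (B (P*q))"
  shows "(\<forall>j\<le>P. okp T (A (P*q+j)) (B (P*q+j))) \<and> A (P*q+P) = T"
proof -
  have st: "\<And>j. j < P \<Longrightarrow> upst T (ee (P*q+j)) (A (P*q+j)) (B (P*q+j)) = (A (P*q+Suc j), B (P*q+Suc j))"
  proof -
    fix j assume "j < P"
    then show "upst T (ee (P*q+j)) (A (P*q+j)) (B (P*q+j)) = (A (P*q+Suc j), B (P*q+Suc j))"
      using step_eq[of "P*q+j"] phase_div[of j q] q unfolding ee_def mv_def by simp
  qed
  show ?thesis using up_final[OF T1, of "\<lambda>j. ee (P*q+j)" "\<lambda>j. A (P*q+j)" "\<lambda>j. B (P*q+j)"] st ok by simp
qed

lemma ph_down2: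
  assumes q: "q mod 4 = 2" and ok: "okp T (B (P*q)) (A (P*q))"
  shows "(\<forall>j\<le>P. okp T (B (P*q+j)) (A (P*q+j))) \<and> B (P*q+P) = 0"
proof -
  have st: "\<And>j. j < P \<Longrightarrow> downst T (ee (P*q+j)) (B (P*q+j)) (A (P*q+j)) = (B (P*q+Suc j), A (P*q+Suc j))"
  proof -
    fix j assume "j < P"
    then have "prod.swap (downst T (ee (P*q+j)) (B (P*q+j)) (A (P*q+j))) = (A (P*q+Suc j), B (P*q+Suc j))"
      using step_eq[of "P*q+j"] phase_div[of j q] q \<open>j < P\<close> unfolding ee_def mv_def by simp
    then show "downst T (ee (P*q+j)) (B (P*q+j)) (A (P*q+j)) = (B (P*q+Suc j), A (P*q+Suc j))"
      by (metis prod.swap_def swap_simp swap_swap)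
  qed
  show ?thesis using down_final[OF T1, of "\<lambda>j. ee (P*q+j)" "\<lambda>j. B (P*q+j)" "\<lambda>j. A (P*q+j)"] st ok by simp
qed

lemma ph_up3:
  assumes q: "q mod 4 = 3" and ok: "okp T (B (P*q)) (A (P*q))"
  shows "(\<forall>j\<le>P. okp T (B (P*q+j)) (A (P*q+j))) \<and> B (P*q+P) = T"
proof -
  have st: "\<And>j. j < P \<Longrightarrow> upst T (ee (P*q+j)) (B (P*q+j)) (A (P*q+j)) = (B (P*q+Suc j), A (P*q+Suc j))"
  proof -
    fix j assume "j < P"
    then have "prod.swap (upst T (ee (P*q+j)) (B (P*q+j)) (A (P*q+j))) = (A (P*q+Suc j), B (P*q+Suc j))"
      using step_eq[of "P*q+j"] phase_div[of j q] q \<open>j < P\<close> unfolding ee_def mv_def by simp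
    then show "upst T (ee (P*q+j)) (B (P*q+j)) (A (P*q+j)) = (B (P*q+Suc j), A (P*q+Suc j))"
      by (metis prod.swap_def swap_simp swap_swap)
  qed
  show ?thesis using up_final[OF T1, of "\<lambda>j. ee (P*q+j)" "\<lambda>j. B (P*q+j)" "\<lambda>j. A (P*q+j)"] st ok by simp
qed

definition "Inv q \<longleftrightarrow> (q mod 4 = 0 \<longrightarrow> okp T (A (P*q)) (B (P*q)))
  \<and> (q mod 4 = 1 \<longrightarrow> A (P*q) = 0 \<and> okp T (A (P*q)) (B (P*q)))
  \<and> (q mod 4 = 2 \<longrightarrow> A (P*q) = T \<and> okp T (B (P*q)) (A (P*q)))
  \<and> (q mod 4 = 3 \<longrightarrow> B (P*q) = 0 \<and> okp T (B (P*q)) (A (P*q)))"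

lemma Inv_all: "Inv q"
proof (induction q)
  case 0 then show ?case using g0 by (simp add: Inv_def okp_def)
next
  case (Suc q)
  have e: "P * Suc q = P*q + P" by simp
  consider "q mod 4 = 0" | "q mod 4 = 1" | "q mod 4 = 2" | "q mod 4 = 3" by linarith
  then show ?case
  proof cases
    case 1
    then have s: "Suc q mod 4 = 1" by presburger
    have h: "(\<forall>j\<le>P. okp T (A (P*q+j)) (B (P*q+j))) \<and> A (P*q+P) = 0"
    proof -
      have "okp T (A (P*q)) (B (P*q))" using Suc 1 unfolding Inv_def by blast
      then show ?thesis using ph_down0[OF 1] by blast
    qed
    then have "okp T (A (P*q+P)) (B (P*q+P))" by blast
    then show ?thesis using h s unfolding Inv_def e by simp
  next
    case 2
    then have s: "Suc q mod 4 = 2" by presburger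
    have h: "(\<forall>j\<le>P. okp T (A (P*q+j)) (B (P*q+j))) \<and> A (P*q+P) = T"
    proof -
      have "okp T (A (P*q)) (B (P*q))" using Suc 2 unfolding Inv_def by blast
      then show ?thesis using ph_up1[OF 2] by blast
    qed
    then have "okp T (A (P*q+P)) (B (P*q+P))" by blast
    then have "okp T (B (P*q+P)) (A (P*q+P))" using h by (simp add: okp_def)
    then show ?thesis using h s unfolding Inv_def e by simp
  next
    case 3
    then have s: "Suc q mod 4 = 3" by presburger
    have h: "(\<forall>j\<le>P. okp T (B (P*q+j)) (A (P*q+j))) \<and> B (P*q+P) = 0"
    proof -
      have "okp T (B (P*q)) (A (P*q))" using Suc 3 unfolding Inv_def by blast
      then show ?thesis using ph_down2[OF 3] by blast
    qed
    then have "okp T (B (P*q+P)) (A (P*q+P))" by blast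
    then show ?thesis using h s unfolding Inv_def e by simp
  next
    case 4
    then have s: "Suc q mod 4 = 0" by presburger
    have h: "(\<forall>j\<le>P. okp T (B (P*q+j)) (A (P*q+j))) \<and> B (P*q+P) = T"
    proof -
      have "okp T (B (P*q)) (A (P*q))" using Suc 4 unfolding Inv_def by blast
      then show ?thesis using ph_up3[OF 4] by blast
    qed
    then have "okp T (B (P*q+P)) (A (P*q+P))" by blast
    then have "okp T (A (P*q+P)) (B (P*q+P))" using h by (simp add: okp_def)
    then show ?thesis using h s unfolding Inv_def e by simp
  qed
qed

lemma bounds: "A i \<le> T \<and> B i \<le> T \<and> T - 1 \<le> A i + B i"
proof -
  define q where "q = i div P"
  define j where "j = i mod P"
  have i: "i = P*q + j" unfolding q_def j_def by (metis div_mult_mod_eq mult.commute)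
  have jP: "j \<le> P" unfolding j_def by (simp add: order_less_imp_le)
  have I: "Inv q" by (rule Inv_all)
  consider "q mod 4 = 0" | "q mod 4 = 1" | "q mod 4 = 2" | "q mod 4 = 3" by linarith
  then show ?thesis
  proof cases
    case 1 then show ?thesis using ph_down0[OF 1] I jP i unfolding Inv_def okp_def by force
  next
    case 2 then show ?thesis using ph_up1[OF 2] I jP i unfolding Inv_def okp_def by force
  next
    case 3 then show ?thesis using ph_down2[OF 3] I jP i unfolding Inv_def okp_def by force
  next
    case 4 then show ?thesis using ph_up3[OF 4] I jP i unfolding Inv_def okp_def by force
  qed
qed

lemma zeroA: "A (P * (4*q+1)) = 0"
  using Inv_all[of "4*q+1"] unfolding Inv_def by simp

lemma zeroB: "B (P * (4*q+3)) = 0"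
  using Inv_all[of "4*q+3"] unfolding Inv_def by simp

end

lemma window_fin: "(0::nat) < M \<Longrightarrow> finite {i. (i + c) div M = w} \<and> card {i. (i + c) div M = w} \<le> M"
proof -
  assume M: "0 < M"
  let ?S = "{i. (i + c) div M = w}"
  have sub: "(\<lambda>i. i + c) ` ?S \<subseteq> {M*w ..< M*w + M}"
  proof
    fix x assume "x \<in> (\<lambda>i. i + c) ` ?S"
    then obtain i where i: "x = i + c" "(i + c) div M = w" by auto
    have "x = M * (x div M) + x mod M" by simp
    moreover have "x mod M < M" using M by simp
    ultimately show "x \<in> {M*w ..< M*w + M}" using i by (metis atLeastLessThan_iff le_add1 nat_add_left_cancel_less)
  qed
  have inj: "inj_on (\<lambda>i. i + c) ?S" by (simp add: inj_on_def)
  have fin: "finite ?S"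
  proof (rule finite_imageD[OF _ inj])
    show "finite ((\<lambda>i. i + c) ` ?S)" using sub finite_subset by blast
  qed
  have "card ?S \<le> card {M*w ..< M*w + M}" using card_inj_on_le[OF inj sub] by simp
  then show ?thesis using fin by simp
qed

lemma arithA: "(i::nat) + 3*p = 4*p*Suc m \<Longrightarrow> i = p*(4*m+1)"
  by (simp add: algebra_simps)
lemma arithB: "(i::nat) + p = 4*p*Suc m \<Longrightarrow> i = p*(4*m+3)"
  by (simp add: algebra_simps)

lemma avoid_exists:
  assumes fin: "finite S" and cS: "card S \<le> m" and mK: "m < card L" and fL: "finite L"
  shows "\<exists>l\<in>L. l \<notin> g ` S"
proof (rule ccontr)
  assume "\<not> ?thesis"
  then have "L \<subseteq> g ` S" by blast
  then have "card L \<le> card (g ` S)" using fin by (simp add: card_mono)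
  also have "\<dots> \<le> card S" by (rule card_image_le[OF fin])
  finally show False using cS mK by simp
qed

context game begin

definition "wA i = (i + 3*P) div (4*P)"
definition "wB i = (i + P) div (4*P)"
definition "legA w = (SOME l. l < K \<and> (\<forall>i. wA i = w \<longrightarrow> C i = 0 \<or> lg k (C i) \<noteq> l))"
definition "legB w = (SOME l. K \<le> l \<and> l < 2*K \<and> (\<forall>i. wB i = w \<longrightarrow> C i = 0 \<or> lg k (C i) \<noteq> l))"

lemma legA_spec: "legA w < K \<and> (\<forall>i. wA i = w \<longrightarrow> C i = 0 \<or> lg k (C i) \<noteq> legA w)"
proof -
  have wf: "finite {i. (i + 3*P) div (4*P) = w} \<and> card {i. (i + 3*P) div (4*P) = w} \<le> 4*P"
    by (rule window_fin) simp
  obtain l where l: "l \<in> {..<K}" "l \<notin> (\<lambda>i. lg k (C i)) ` {i. (i + 3*P) div (4*P) = w}"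
    using avoid_exists[of _ "4*P" "{..<K}"] wf KP by (metis card_lessThan finite_lessThan)
  then have "l < K \<and> (\<forall>i. wA i = w \<longrightarrow> C i = 0 \<or> lg k (C i) \<noteq> l)" unfolding wA_def by auto
  then show ?thesis unfolding legA_def by (rule someI)
qed

lemma legB_spec: "K \<le> legB w \<and> legB w < 2*K \<and> (\<forall>i. wB i = w \<longrightarrow> C i = 0 \<or> lg k (C i) \<noteq> legB w)"
proof -
  have wf: "finite {i. (i + P) div (4*P) = w} \<and> card {i. (i + P) div (4*P) = w} \<le> 4*P"
    by (rule window_fin) simp
  have cK: "card {K..<2*K} = K" by simp
  obtain l where l: "l \<in> {K..<2*K}" "l \<notin> (\<lambda>i. lg k (C i)) ` {i. (i + P) div (4*P) = w}"
    using avoid_exists[of _ "4*P" "{K..<2*K}"] wf KP cK by (metis finite_atLeastLessThan)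
  then have "K \<le> l \<and> l < 2*K \<and> (\<forall>i. wB i = w \<longrightarrow> C i = 0 \<or> lg k (C i) \<noteq> l)" unfolding wB_def by auto
  then show ?thesis unfolding legB_def by (rule someI)
qed

lemma Suc_div_change: "0 < M \<Longrightarrow> Suc x div M \<noteq> x div M \<Longrightarrow> \<exists>m. Suc x = M * Suc m"
proof -
  assume M: "0 < M" and d: "Suc x div M \<noteq> x div M"
  have s: "Suc x mod M = 0"
  proof (rule ccontr)
    assume nm: "Suc x mod M \<noteq> 0"
    have "Suc x div M = (if Suc x mod M = 0 then Suc (x div M) else x div M)" by (rule div_Suc)
    then have "Suc x div M = x div M" unfolding if_not_P[OF nm] .
    then show False using d by simp
  qed
  have e: "M * (Suc x div M) + Suc x mod M = Suc x" by (rule mult_div_mod_eq)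
  then have e2: "Suc x = M * (Suc x div M)" using s by simp
  then have "Suc x div M \<noteq> 0" by (metis mult_0_right nat.distinct(1))
  then obtain m where "Suc x div M = Suc m" using not0_implies_Suc by blast
  then show ?thesis using e2 by metis
qed

lemma wA_change: "wA (Suc i) \<noteq> wA i \<Longrightarrow> A (Suc i) = 0"
proof -
  assume "wA (Suc i) \<noteq> wA i"
  then have "Suc (i + 3*P) div (4*P) \<noteq> (i + 3*P) div (4*P)" unfolding wA_def by simp
  then have "\<exists>m. Suc (i + 3*P) = 4*P * Suc m" by (intro Suc_div_change) simp_all
  then obtain m where m: "Suc (i + 3*P) = 4*P * Suc m" by blast
  have "Suc i = P * (4*m+1)" using m by (intro arithA) simp
  then show ?thesis using zeroA by simp
qed

lemma wB_change: "wB (Suc i) \<noteq> wB i \<Longrightarrow> B (Suc i) = 0"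
proof -
  assume "wB (Suc i) \<noteq> wB i"
  then have "Suc (i + P) div (4*P) \<noteq> (i + P) div (4*P)" unfolding wB_def by simp
  then have "\<exists>m. Suc (i + P) = 4*P * Suc m" by (intro Suc_div_change) simp_all
  then obtain m where m: "Suc (i + P) = 4*P * Suc m" by blast
  have "Suc i = P * (4*m+3)" using m by (intro arithB) simp
  then show ?thesis by (simp only: zeroB)
qed

definition "mA t = pos k (legA (wA (t - 1))) (A (t - 1))"
definition "mB t = pos k (legB (wB (t - 1))) (B (t - 1))"

lemma kK2: "K < k" using kK KP by simp

lemma pos_lt: "l < k \<Longrightarrow> t \<le> T \<Longrightarrow> pos k l t < n"
proof -
  assume l: "l < k" and t: "t \<le> T"
  show ?thesis
  proof (cases "t = 0")
    case True then show ?thesis using Tn by (simp add: pos_def)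
  next
    case False
    then have "(t - 1) * k + l + 1 \<le> (t - 1) * k + k" using l by simp
    also have "\<dots> = t * k" using False by (metis Suc_pred' add.commute mult_Suc not_gr_zero)
    also have "\<dots> \<le> T * k" using t by simp
    finally show ?thesis using Tn False by (simp add: pos_def)
  qed
qed

lemma dist_pos: "l < k \<Longrightarrow> t \<le> T \<Longrightarrow> (c = 0 \<or> lg k c \<noteq> l \<or> t = 0) \<Longrightarrow> c < n \<Longrightarrow>
   gdist E c (pos k l t) = dep k c + t"
proof -
  assume l: "l < k" and t: "t \<le> T" and c: "c = 0 \<or> lg k c \<noteq> l \<or> t = 0" and cn: "c < n"
  have g: "gdist E c (pos k l t) = dd k c (pos k l t)" by (rule gdist_eq[OF cn pos_lt[OF l t]])
  show ?thesis
  proof (cases "t = 0")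
    case True then show ?thesis using g by (simp add: dd_def)
  next
    case False
    then have "lg k (pos k l t) = l" "dep k (pos k l t) = t" "pos k l t \<noteq> 0" using l by simp_all
    then show ?thesis using g c False by (auto simp: dd_def)
  qed
qed

lemma par_pos: "l < k \<Longrightarrow> par k (pos k l (Suc t)) = pos k l t"
  by (cases t) (auto simp: par_def pos_def)

lemma valid_step: "l < k \<Longrightarrow> l' < k \<Longrightarrow> t \<le> T \<Longrightarrow> t' \<le> T \<Longrightarrow> t' \<le> t + 1 \<Longrightarrow> t \<le> t' + 1 \<Longrightarrow>
   (l = l' \<or> t' = 0) \<Longrightarrow> pos k l' t' = pos k l t \<or> E (pos k l t) (pos k l' t')"
proof -
  assume l: "l < k" "l' < k" and t: "t \<le> T" "t' \<le> T" "t' \<le> t + 1" "t \<le> t' + 1" and ll: "l = l' \<or> t' = 0"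
  consider "t' = t" | "t' = Suc t" | "t = Suc t'" using t by linarith
  then show ?thesis
  proof cases
    case 1 then show ?thesis using ll by auto
  next
    case 2
    then have "l = l'" using ll by simp
    then show ?thesis using 2 E_par[OF pos_lt[OF l(2) t(2)]] par_pos[OF l(2)] by simp
  next
    case 3
    have "l = l' \<or> t' = 0" by fact
    then have "pos k l' t' = pos k l t'" by auto
    moreover have "E (pos k l t) (pos k l t')"
      using E_sym[OF E_par[OF pos_lt[OF l(1) t(1)]]] par_pos[OF l(1)] 3 by simp
    ultimately show ?thesis by simp
  qed
qed

lemma mA_lt: "mA t < n"
proof -
  have "legA (wA (t - 1)) < k" using legA_spec kK2 by (meson less_trans)
  then show ?thesis unfolding mA_def using bounds by (intro pos_lt) auto
qed

lemma mB_lt: "mB t < n"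
proof -
  have "legB (wB (t - 1)) < k" using legB_spec kK by simp
  then show ?thesis unfolding mB_def using bounds by (intro pos_lt) auto
qed

lemma mA_step: "mA (Suc (Suc i)) = mA (Suc i) \<or> E (mA (Suc i)) (mA (Suc (Suc i)))"
proof -
  have l1: "legA (wA i) < k" using legA_spec kK2 by (meson less_trans)
  have l2: "legA (wA (Suc i)) < k" using legA_spec kK2 by (meson less_trans)
  have ll: "legA (wA i) = legA (wA (Suc i)) \<or> A (Suc i) = 0" using wA_change by metis
  have "pos k (legA (wA (Suc i))) (A (Suc i)) = pos k (legA (wA i)) (A i) \<or>
      E (pos k (legA (wA i)) (A i)) (pos k (legA (wA (Suc i))) (A (Suc i)))"
    using valid_step[OF l1 l2] bounds[of i] bounds[of "Suc i"] lipA[of i] ll by blast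
  then show ?thesis unfolding mA_def by simp
qed

lemma mB_step: "mB (Suc (Suc i)) = mB (Suc i) \<or> E (mB (Suc i)) (mB (Suc (Suc i)))"
proof -
  have l1: "legB (wB i) < k" using legB_spec kK by simp
  have l2: "legB (wB (Suc i)) < k" using legB_spec kK by simp
  have ll: "legB (wB i) = legB (wB (Suc i)) \<or> B (Suc i) = 0" using wB_change by metis
  have "pos k (legB (wB (Suc i))) (B (Suc i)) = pos k (legB (wB i)) (B i) \<or>
      E (pos k (legB (wB i)) (B i)) (pos k (legB (wB (Suc i))) (B (Suc i)))"
    using valid_step[OF l1 l2] bounds[of i] bounds[of "Suc i"] lipA[of i] ll by blast
  then show ?thesis unfolding mB_def by simp
qed

lemma mA_dist: "gdist E (C i) (mA (Suc i)) = dep k (C i) + A i"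
proof -
  have l1: "legA (wA i) < k" using legA_spec kK2 by (meson less_trans)
  show ?thesis unfolding mA_def diff_Suc_1 using legA_spec[of "wA i"] l1 bounds C_lt by (intro dist_pos) auto
qed

lemma mB_dist: "gdist E (C i) (mB (Suc i)) = dep k (C i) + B i"
proof -
  have l1: "legB (wB i) < k" using legB_spec kK by simp
  show ?thesis unfolding mB_def diff_Suc_1 using legB_spec[of "wB i"] l1 bounds C_lt by (intro dist_pos) auto
qed

lemma mouse_ok: "mouse_seq {..<n} E mA"
  unfolding mouse_seq_def
proof (intro conjI allI impI)
  fix i :: nat assume "i \<ge> 1" then show "mA i \<in> {..<n}" using mA_lt by simp
next
  fix i :: nat assume "i \<ge> 2"
  then obtain j where "i = Suc (Suc j)" by (metis add_2_eq_Suc le_Suc_ex)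
  then show "mA i = mA (i - 1) \<or> E (mA (i - 1)) (mA i)" using mA_step by simp
qed

lemma hist_eq: "hist E c1 c2 f mA (Suc i) = H i \<and> cat_at c1 c2 f (Suc i) (hist E c1 c2 f mA i) = C i"
proof (induction i)
  case 0 then show ?case using g0 by (simp add: cat_at_def)
next
  case (Suc i)
  have c: "cat_at c1 c2 f (Suc (Suc i)) (hist E c1 c2 f mA (Suc i)) = C (Suc i)"
    using Suc CS by simp
  have "hist E c1 c2 f mA (Suc (Suc i)) = H i @ [gdist E (C (Suc i)) (mA (Suc (Suc i))) \<le> gdist E (C i) (mA (Suc i))]"
    using Suc c by simp
  also have "\<dots> = H (Suc i)" using mA_dist[of i] mA_dist[of "Suc i"] HS by simp
  finally show ?case using c by simp
qed

lemma catpos_eq: "catpos E c1 c2 f mA (Suc i) = C i"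
  using hist_eq by (simp add: catpos_def)

lemma answer_eq: "answer E c1 c2 f mA (Suc (Suc i)) \<longleftrightarrow> (dep k (C (Suc i)) + A (Suc i) \<le> dep k (C i) + A i)"
  unfolding answer_def using catpos_eq[of i] catpos_eq[of "Suc i"] mA_dist[of i] mA_dist[of "Suc i"] by simp

lemma inM_gen:
  assumes lt: "\<And>t. X t < n"
    and st: "\<And>i. X (Suc (Suc i)) = X (Suc i) \<or> E (X (Suc i)) (X (Suc (Suc i)))"
    and di: "\<And>i. gdist E (C i) (X (Suc i)) = dep k (C i) + Y i"
    and bt: "\<And>i. (dep k (C (Suc i)) + Y (Suc i) \<le> dep k (C i) + Y i) = (dep k (C (Suc i)) + A (Suc i) \<le> dep k (C i) + A i)"
  shows "X t \<in> Mset {..<n} E c1 c2 f mA t"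
  unfolding Mset_def
proof (intro CollectI exI conjI ballI)
  show "X t = X t" ..
  fix j assume "j \<in> {1..t}" then show "X j \<in> {..<n}" using lt by simp
next
  fix j assume "j \<in> {2..t}"
  then obtain i where j: "j = Suc (Suc i)" by (metis atLeastAtMost_iff add_2_eq_Suc le_Suc_ex)
  show "X j = X (j - 1) \<or> E (X (j - 1)) (X j)" using st j by simp
  show "(gdist E (catpos E c1 c2 f mA j) (X j) \<le> gdist E (catpos E c1 c2 f mA (j - 1)) (X (j - 1))) \<longleftrightarrow> answer E c1 c2 f mA j"
    using j catpos_eq[of i] catpos_eq[of "Suc i"] di[of i] di[of "Suc i"] answer_eq[of i] bt[of i] by simp
qed

lemma mA_in: "mA t \<in> Mset {..<n} E c1 c2 f mA t"
  by (rule inM_gen[OF mA_lt mA_step mA_dist]) simp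

lemma mB_in: "mB t \<in> Mset {..<n} E c1 c2 f mA t"
  by (rule inM_gen[OF mB_lt mB_step mB_dist bitB[symmetric]])

end

context game begin

lemma M_sub: "t \<ge> 1 \<Longrightarrow> Mset {..<n} E c1 c2 f mA t \<subseteq> {..<n}"
  unfolding Mset_def by auto

lemma dd_AB: "dd k (mA t) (mB t) = A (t - 1) + B (t - 1)"
proof -
  define la where "la = legA (wA (t - 1))"
  define lb where "lb = legB (wB (t - 1))"
  have la: "la < K" using legA_spec unfolding la_def by blast
  have lb: "K \<le> lb" "lb < k" using legB_spec kK unfolding lb_def by auto
  have lak: "la < k" using la lb by simp
  have x: "mA t = pos k la (A (t - 1))" unfolding mA_def la_def ..
  have y: "mB t = pos k lb (B (t - 1))" unfolding mB_def lb_def ..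
  show ?thesis
  proof (cases "A (t - 1) = 0 \<or> B (t - 1) = 0")
    case True then show ?thesis unfolding x y using lak lb by (auto simp: dd_def)
  next
    case False
    then have "lg k (pos k la (A (t - 1))) = la" "lg k (pos k lb (B (t - 1))) = lb" using lak lb by auto
    then show ?thesis unfolding x y using lak lb la False by (auto simp: dd_def)
  qed
qed

lemma grad_bound: "t \<ge> 1 \<Longrightarrow> T - 1 \<le> 2 * grad {..<n} E (Mset {..<n} E c1 c2 f mA t)"
proof -
  assume t: "t \<ge> 1"
  define M where "M = Mset {..<n} E c1 c2 f mA t"
  have Ms: "M \<subseteq> {..<n}" using M_sub[OF t] unfolding M_def .
  have fM: "finite M" using Ms finite_subset by blast
  have x: "mA t \<in> M" and y: "mB t \<in> M" unfolding M_def by (rule mA_in, rule mB_in)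
  define F where "F = (\<lambda>v. Max ((\<lambda>w. gdist E v w) ` M))"
  have n0: "0 < n" using mA_lt by (metis gr_zeroI less_nat_zero_code)
  have key: "T - 1 \<le> 2 * F v" if v: "v < n" for v
  proof -
    have fx: "gdist E v (mA t) \<le> F v" unfolding F_def using fM x by (intro Max_ge) auto
    have fy: "gdist E v (mB t) \<le> F v" unfolding F_def using fM y by (intro Max_ge) auto
    have "dd k (mA t) (mB t) \<le> dd k (mA t) v + dd k v (mB t)" by (rule dd_tri)
    also have "\<dots> = gdist E v (mA t) + gdist E v (mB t)"
      using gdist_eq[OF v mA_lt] gdist_eq[OF v mB_lt] dd_sym by simp
    finally have "dd k (mA t) (mB t) \<le> 2 * F v" using fx fy by simp
    moreover have "T - 1 \<le> dd k (mA t) (mB t)" using dd_AB bounds by simp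
    ultimately show ?thesis by simp
  qed
  have "grad {..<n} E M \<in> F ` {..<n}" unfolding grad_def F_def[symmetric]
    using n0 by (intro Min_in) auto
  then obtain v where "v < n" "grad {..<n} E M = F v" by auto
  then show ?thesis using key unfolding M_def by simp
qed

end

lemma arith_big: "30 \<le> (s::nat) \<Longrightarrow> (s + 12) * (16 * s + 252) < 36 * (s * s)"
proof -
  assume s: "30 \<le> s"
  have h: "30 * s \<le> s * s" using s by (simp add: mult_le_mono1)
  have e: "(s + 12) * (16 * s + 252) = 16 * (s * s) + 444 * s + 3024" by (simp add: algebra_simps)
  show ?thesis unfolding e using h s by linarith
qed

theorem theorem1p2:
  shows "\<exists>N::nat. \<forall>n\<ge>N. \<exists>E :: nat \<Rightarrow> nat \<Rightarrow> bool. is_tree {..<n} E \<and>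
    (\<forall>c1 c2 (f :: bool list \<Rightarrow> nat). c1 \<in> {..<n} \<and> c2 \<in> {..<n} \<and> (\<forall>h. f h \<in> {..<n}) \<longrightarrow>
       (\<exists>m. mouse_seq {..<n} E m \<and>
          (\<forall>i\<ge>1. real (grad {..<n} E (Mset {..<n} E c1 c2 f m i)) > sqrt (real n) / 12)))"
proof (rule exI[of _ 900], intro allI impI)
  fix n :: nat assume n: "900 \<le> n"
  define s where "s = nat \<lfloor>sqrt (real n)\<rfloor>"
  define T where "T = s div 6 + 2"
  define K where "K = 8 * T + 5"
  define k where "k = 2 * K"
  have sq0: "0 \<le> sqrt (real n)" by simp
  have s_le: "real s \<le> sqrt (real n)" unfolding s_def using sq0 by simp
  have s_gt: "sqrt (real n) < real s + 1" unfolding s_def using sq0 by linarith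
  have "sqrt ((30::real)^2) \<le> sqrt (real n)" using n by (intro real_sqrt_le_mono) simp
  then have "30 \<le> sqrt (real n)" by simp
  then have "(30::int) \<le> \<lfloor>sqrt (real n)\<rfloor>" by (simp add: le_floor_iff)
  then have s30: "30 \<le> s" unfolding s_def by linarith
  have "real s * real s \<le> sqrt (real n) * sqrt (real n)" using s_le by (intro mult_mono) auto
  also have "\<dots> = real n" by simp
  finally have "real (s * s) \<le> real n" by simp
  then have ssn: "s * s \<le> n" by (simp only: of_nat_le_iff)
  have sixT: "6 * T \<le> s + 12" unfolding T_def by simp
  have Tk: "T * k < n"
  proof -
    have "36 * (T * k) = (6 * T) * (16 * (6 * T) + 60)" unfolding k_def K_def by (simp add: algebra_simps)
    also have "\<dots> \<le> (s + 12) * (16 * (s + 12) + 60)" using sixT by (intro mult_mono) auto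
    also have "\<dots> = (s + 12) * (16 * s + 252)" by simp
    also have "\<dots> < 36 * (s * s)" by (rule arith_big[OF s30])
    also have "\<dots> \<le> 36 * n" using ssn by simp
    finally show ?thesis by simp
  qed
  have Treal: "sqrt (real n) / 6 < real T - 1"
  proof -
    have "s + 1 \<le> 6 * (s div 6) + 6" by linarith
    then have "s + 1 \<le> 6 * (T - 1)" unfolding T_def by simp
    then have "real (s + 1) \<le> real (6 * (T - 1))" by (simp only: of_nat_le_iff)
    moreover have "real (6 * (T - 1)) = 6 * (real T - 1)" unfolding T_def by simp
    ultimately have "real s + 1 \<le> 6 * (real T - 1)" by simp
    then have "sqrt (real n) < 6 * (real T - 1)" using s_gt by linarith
    then show ?thesis by (simp add: divide_less_eq mult.commute)
  qed
  interpret S: spider n k by unfold_locales (simp add: k_def K_def)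
  show "\<exists>E :: nat \<Rightarrow> nat \<Rightarrow> bool. is_tree {..<n} E \<and>
    (\<forall>c1 c2 (f :: bool list \<Rightarrow> nat). c1 \<in> {..<n} \<and> c2 \<in> {..<n} \<and> (\<forall>h. f h \<in> {..<n}) \<longrightarrow>
       (\<exists>m. mouse_seq {..<n} E m \<and>
          (\<forall>i\<ge>1. real (grad {..<n} E (Mset {..<n} E c1 c2 f m i)) > sqrt (real n) / 12)))"
  proof (intro exI conjI)
    show "is_tree {..<n} (sE n k)" using n by (intro S.tree) simp
    show "\<forall>c1 c2 (f :: bool list \<Rightarrow> nat). c1 \<in> {..<n} \<and> c2 \<in> {..<n} \<and> (\<forall>h. f h \<in> {..<n}) \<longrightarrow>
       (\<exists>m. mouse_seq {..<n} (sE n k) m \<and>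
          (\<forall>i\<ge>1. real (grad {..<n} (sE n k) (Mset {..<n} (sE n k) c1 c2 f m i)) > sqrt (real n) / 12))"
    proof (intro allI impI)
    fix c1 c2 :: nat and f :: "bool list \<Rightarrow> nat"
    assume cf: "c1 \<in> {..<n} \<and> c2 \<in> {..<n} \<and> (\<forall>h. f h \<in> {..<n})"
    interpret G: game n k T K c1 c2 f
      by unfold_locales (use cf Tk in \<open>auto simp: k_def K_def T_def\<close>)
    show "\<exists>m. mouse_seq {..<n} (sE n k) m \<and>
          (\<forall>i\<ge>1. real (grad {..<n} (sE n k) (Mset {..<n} (sE n k) c1 c2 f m i)) > sqrt (real n) / 12)"
    proof (intro exI conjI allI impI)
      show "mouse_seq {..<n} (sE n k) G.mA" by (rule G.mouse_ok)
      fix i :: nat assume i: "1 \<le> i"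
      have "T - 1 \<le> 2 * grad {..<n} (sE n k) (Mset {..<n} (sE n k) c1 c2 f G.mA i)" by (rule G.grad_bound[OF i])
      then have "real T - 1 \<le> 2 * real (grad {..<n} (sE n k) (Mset {..<n} (sE n k) c1 c2 f G.mA i))"
        unfolding T_def by linarith
      then show "real (grad {..<n} (sE n k) (Mset {..<n} (sE n k) c1 c2 f G.mA i)) > sqrt (real n) / 12"
        using Treal by linarith
    qed
    qed
  qed
qed

end
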